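(* Let $\Gamma\in\mathbb{R}^{n\times m}$ and let $R:\mathbb{R}^n_{\ge0}\to\mathbb{R}^m$ be locally Lipschitz, such that the system $\dot S=\Gamma R(S)$ leaves $\mathbb{R}^n_{\ge0}$ invariant and is forward complete (every solution starting in $\mathbb{R}^n_{\ge0}$ is defined and stays in $\mathbb{R}^n_{\ge0}$ for all $t\ge0$). Fix $\sigma\in\mathbb{R}^n_{\ge0}$ and consider $\dot x=R(\sigma+\Gamma x)$ on $X_\sigma=\{x\in\mathbb{R}^m:\sigma+\Gamma x\ge0\}$. Then every solution of this system with initial condition in $X_\sigma$ is defined for all $t\ge0$ and remains in $X_\sigma$. Furthermore, if every solution of $\dot S=\Gamma R(S)$ in $\mathbb{R}^n_{\ge0}$ is bounded, then for every solution $x(t)$ of $\dot x=R(\sigma+\Gamma x)$ on $X_\sigma$, $\Gamma x(t)$ is bounded for $t\ge0$.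
   Context: Inequalities between vectors are componentwise. *)

theory Defs
  imports "HOL-Analysis.Analysis"
begin

definition nonneg_orthant :: "(real ^ 'n) set" where
  "nonneg_orthant = {S. \<forall>i. 0 \<le> S $ i}"

definition is_solution ::
  "(real \<Rightarrow> 'a::real_normed_vector) \<Rightarrow> ('a \<Rightarrow> 'a) \<Rightarrow> 'a set \<Rightarrow> real set \<Rightarrow> bool" where
  "is_solution x f D J \<longleftrightarrow>
     (\<forall>t\<in>J. x t \<in> D \<and> (x has_vector_derivative f (x t)) (at t within J))"

definition forward_complete :: "('a::real_normed_vector \<Rightarrow> 'a) \<Rightarrow> 'a set \<Rightarrow> bool" where
  "forward_complete f D \<longleftrightarrow>
     (\<forall>x0\<in>D. \<exists>x. x 0 = x0 \<and> is_solution x f D {0..}) \<and>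
     (\<forall>T>0. \<forall>y. is_solution y f D {0..<T} \<longrightarrow>
        (\<exists>x. is_solution x f D {0..} \<and> (\<forall>t\<in>{0..<T}. x t = y t)))"

end

theory Submission
  imports Defs
begin

lemma antideriv:
  fixes g :: "real \<Rightarrow> 'a::banach"
  assumes "continuous_on {0..} g"
  shows "\<exists>G. G 0 = 0 \<and> (\<forall>t\<ge>0. (G has_vector_derivative g t) (at t within {0..}))"
proof (rule exI[where x="\<lambda>u. integral {0..u} g"], intro conjI allI impI)
  show "integral {0..0} g = 0" by simp
  fix t :: real assume t: "t \<ge> 0"
  have c: "continuous_on {0..t+1} g" using assms by (rule continuous_on_subset) auto
  have d: "((\<lambda>u. integral {0..u} g) has_vector_derivative g t) (at t within {0..t+1})"
    using integral_has_vector_derivative[OF c] t by auto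
  have "at t within {0..t+1} = at t within {0..}"
    by (rule at_within_nhd[where S="{..<t+1}"]) auto
  with d show "((\<lambda>u. integral {0..u} g) has_vector_derivative g t) (at t within {0..})" by simp
qed

lemma lin_sol:
  fixes \<Gamma> :: "real ^ 'm ^ 'n" and R :: "real ^ 'n \<Rightarrow> real ^ 'm" and \<sigma> :: "real ^ 'n"
  assumes "is_solution x (\<lambda>x. R (\<sigma> + \<Gamma> *v x)) {x. \<sigma> + \<Gamma> *v x \<in> nonneg_orthant} J"
  shows "is_solution (\<lambda>t. \<sigma> + \<Gamma> *v x t) (\<lambda>S. \<Gamma> *v R S) nonneg_orthant J"
  unfolding is_solution_def
proof
  fix t assume t: "t \<in> J"
  have "(x has_vector_derivative R (\<sigma> + \<Gamma> *v x t)) (at t within J)" and m: "\<sigma> + \<Gamma> *v x t \<in> nonneg_orthant"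
    using assms t unfolding is_solution_def by auto
  then have "((\<lambda>t. \<Gamma> *v x t) has_vector_derivative \<Gamma> *v R (\<sigma> + \<Gamma> *v x t)) (at t within J)"
    using bounded_linear.has_vector_derivative[OF matrix_vector_mul_bounded_linear] by blast
  then have "((\<lambda>t. \<sigma> + \<Gamma> *v x t) has_vector_derivative \<Gamma> *v R (\<sigma> + \<Gamma> *v x t)) (at t within J)"
    using has_vector_derivative_add[OF has_vector_derivative_const] by fastforce
  with m show "\<sigma> + \<Gamma> *v x t \<in> nonneg_orthant \<and>
    ((\<lambda>t. \<sigma> + \<Gamma> *v x t) has_vector_derivative \<Gamma> *v R (\<sigma> + \<Gamma> *v x t)) (at t within J)" by simp
qed

lemma lift_sol:
  fixes \<Gamma> :: "real ^ 'm ^ 'n" and R :: "real ^ 'n \<Rightarrow> real ^ 'm" and \<sigma> :: "real ^ 'n"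
  assumes lip: "local_lipschitz (UNIV :: real set) nonneg_orthant (\<lambda>_. R)"
    and S: "is_solution S (\<lambda>S. \<Gamma> *v R S) nonneg_orthant {0..}"
    and x0: "\<sigma> + \<Gamma> *v x0 = S 0"
  shows "\<exists>x. x 0 = x0 \<and> is_solution x (\<lambda>x. R (\<sigma> + \<Gamma> *v x)) {x. \<sigma> + \<Gamma> *v x \<in> nonneg_orthant} {0..}
     \<and> (\<forall>t\<ge>0. \<sigma> + \<Gamma> *v x t = S t)"
proof -
  have cR: "continuous_on nonneg_orthant R"
    using local_lipschitz_continuous_on[OF lip] by auto
  have Sd: "\<And>t. t \<ge> 0 \<Longrightarrow> (S has_vector_derivative \<Gamma> *v R (S t)) (at t within {0..})"
    and Sm: "\<And>t. t \<ge> 0 \<Longrightarrow> S t \<in> nonneg_orthant"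
    using S unfolding is_solution_def by auto
  have cS: "continuous_on {0..} S"
    unfolding continuous_on_eq_continuous_within
    using Sd has_vector_derivative_continuous by fastforce
  have cRS: "continuous_on {0..} (\<lambda>t. R (S t))"
    by (rule continuous_on_compose2[OF cR cS]) (use Sm in auto)
  obtain G where G0: "G 0 = 0" and Gd: "\<And>t. t \<ge> 0 \<Longrightarrow> (G has_vector_derivative R (S t)) (at t within {0..})"
    using antideriv[OF cRS] by blast
  define x where "x = (\<lambda>t. x0 + G t)"
  have xd: "(x has_vector_derivative R (S t)) (at t within {0..})" if "t \<ge> 0" for t
    unfolding x_def using has_vector_derivative_add[OF has_vector_derivative_const Gd[OF that]] by simp
  have hd: "((\<lambda>t. \<sigma> + \<Gamma> *v x t - S t) has_derivative (\<lambda>h. 0)) (at t within {0..})" if "t \<in> {0..}" for t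
  proof -
    have "((\<lambda>t. \<Gamma> *v x t) has_vector_derivative \<Gamma> *v R (S t)) (at t within {0..})"
      using bounded_linear.has_vector_derivative[OF matrix_vector_mul_bounded_linear xd] that by auto
    then have "((\<lambda>t. \<sigma> + \<Gamma> *v x t) has_vector_derivative 0 + \<Gamma> *v R (S t)) (at t within {0..})"
      by (rule has_vector_derivative_add[OF has_vector_derivative_const])
    then have "((\<lambda>t. \<sigma> + \<Gamma> *v x t - S t) has_vector_derivative 0 + \<Gamma> *v R (S t) - \<Gamma> *v R (S t)) (at t within {0..})"
      by (rule has_vector_derivative_diff) (use Sd that in auto)
    then show ?thesis by (simp add: has_vector_derivative_def)
  qed
  obtain c where c: "\<And>t. t \<in> {0..} \<Longrightarrow> \<sigma> + \<Gamma> *v x t - S t = c"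
    using has_derivative_zero_constant[OF _ hd] by (metis convex_real_interval(1))
  have "c = 0" using c[of 0] x0 G0 by (simp add: x_def)
  then have eq: "\<And>t. t \<ge> 0 \<Longrightarrow> \<sigma> + \<Gamma> *v x t = S t" using c by fastforce
  show ?thesis
  proof (intro exI conjI allI impI)
    show "x 0 = x0" using G0 by (simp add: x_def)
    show "is_solution x (\<lambda>x. R (\<sigma> + \<Gamma> *v x)) {x. \<sigma> + \<Gamma> *v x \<in> nonneg_orthant} {0..}"
      unfolding is_solution_def using eq Sm xd by auto
  qed (rule eq)
qed

theorem lemma4:
  fixes \<Gamma> :: "real ^ 'm ^ 'n" and R :: "real ^ 'n \<Rightarrow> real ^ 'm" and \<sigma> :: "real ^ 'n"
  assumes lip: "local_lipschitz (UNIV :: real set) nonneg_orthant (\<lambda>_. R)"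
    and fc: "forward_complete (\<lambda>S. \<Gamma> *v R S) nonneg_orthant"
    and sigma: "\<sigma> \<in> nonneg_orthant"
  shows "forward_complete (\<lambda>x. R (\<sigma> + \<Gamma> *v x)) {x. \<sigma> + \<Gamma> *v x \<in> nonneg_orthant}
    \<and> ((\<forall>S. is_solution S (\<lambda>S. \<Gamma> *v R S) nonneg_orthant {0..} \<longrightarrow> bounded (S ` {0..}))
        \<longrightarrow> (\<forall>x. is_solution x (\<lambda>x. R (\<sigma> + \<Gamma> *v x)) {x. \<sigma> + \<Gamma> *v x \<in> nonneg_orthant} {0..}
               \<longrightarrow> bounded ((\<lambda>t. \<Gamma> *v x t) ` {0..})))"
proof (intro conjI impI allI)
  have fc1: "\<And>x0. x0 \<in> nonneg_orthant \<Longrightarrow> \<exists>S. S 0 = x0 \<and> is_solution S (\<lambda>S. \<Gamma> *v R S) nonneg_orthant {0..}"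
    and fc2: "\<And>T y. T > 0 \<Longrightarrow> is_solution y (\<lambda>S. \<Gamma> *v R S) nonneg_orthant {0..<T} \<Longrightarrow>
        (\<exists>x. is_solution x (\<lambda>S. \<Gamma> *v R S) nonneg_orthant {0..} \<and> (\<forall>t\<in>{0..<T}. x t = y t))"
    using fc unfolding forward_complete_def by auto
  show "forward_complete (\<lambda>x. R (\<sigma> + \<Gamma> *v x)) {x. \<sigma> + \<Gamma> *v x \<in> nonneg_orthant}"
    unfolding forward_complete_def
  proof (intro conjI ballI allI impI)
    fix x0 assume "x0 \<in> {x. \<sigma> + \<Gamma> *v x \<in> nonneg_orthant}"
    then obtain S where "S 0 = \<sigma> + \<Gamma> *v x0" "is_solution S (\<lambda>S. \<Gamma> *v R S) nonneg_orthant {0..}"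
      using fc1 by force
    then show "\<exists>x. x 0 = x0 \<and> is_solution x (\<lambda>x. R (\<sigma> + \<Gamma> *v x)) {x. \<sigma> + \<Gamma> *v x \<in> nonneg_orthant} {0..}"
      using lift_sol[OF lip, of S \<Gamma> \<sigma> x0] by auto
  next
    fix T :: real and y
    assume T: "T > 0" and y: "is_solution y (\<lambda>x. R (\<sigma> + \<Gamma> *v x)) {x. \<sigma> + \<Gamma> *v x \<in> nonneg_orthant} {0..<T}"
    obtain S where S: "is_solution S (\<lambda>S. \<Gamma> *v R S) nonneg_orthant {0..}"
      and SE: "\<And>t. t\<in>{0..<T} \<Longrightarrow> S t = \<sigma> + \<Gamma> *v y t"
      using fc2[OF T lin_sol[OF y]] by blast
    have "\<sigma> + \<Gamma> *v y 0 = S 0" using SE[of 0] T by auto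
    then obtain x where x0: "x 0 = y 0"
      and xs: "is_solution x (\<lambda>x. R (\<sigma> + \<Gamma> *v x)) {x. \<sigma> + \<Gamma> *v x \<in> nonneg_orthant} {0..}"
      and xS: "\<And>t. t \<ge> 0 \<Longrightarrow> \<sigma> + \<Gamma> *v x t = S t"
      using lift_sol[OF lip S] by blast
    have hd: "((\<lambda>t. x t - y t) has_derivative (\<lambda>h. 0)) (at t within {0..<T})" if t: "t \<in> {0..<T}" for t
    proof -
      have "(x has_vector_derivative R (\<sigma> + \<Gamma> *v x t)) (at t within {0..})"
        using xs t unfolding is_solution_def by auto
      then have a: "(x has_vector_derivative R (S t)) (at t within {0..<T})"
        using xS[of t] t by (auto intro: has_vector_derivative_within_subset)
      have b: "(y has_vector_derivative R (S t)) (at t within {0..<T})"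
        using y t SE[OF t] unfolding is_solution_def by auto
      have "((\<lambda>t. x t - y t) has_vector_derivative R (S t) - R (S t)) (at t within {0..<T})"
        by (rule has_vector_derivative_diff[OF a b])
      then show ?thesis by (simp add: has_vector_derivative_def)
    qed
    obtain c where c: "\<And>t. t \<in> {0..<T} \<Longrightarrow> x t - y t = c"
      using has_derivative_zero_constant[OF _ hd] by (metis convex_real_interval(7))
    have "c = 0" using c[of 0] x0 T by simp
    then have "\<forall>t\<in>{0..<T}. x t = y t" using c by fastforce
    with xs show "\<exists>x. is_solution x (\<lambda>x. R (\<sigma> + \<Gamma> *v x)) {x. \<sigma> + \<Gamma> *v x \<in> nonneg_orthant} {0..}
        \<and> (\<forall>t\<in>{0..<T}. x t = y t)" by blast
  qed
next
  fix x
  assume B: "\<forall>S. is_solution S (\<lambda>S. \<Gamma> *v R S) nonneg_orthant {0..} \<longrightarrow> bounded (S ` {0..})"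
    and x: "is_solution x (\<lambda>x. R (\<sigma> + \<Gamma> *v x)) {x. \<sigma> + \<Gamma> *v x \<in> nonneg_orthant} {0..}"
  have "bounded ((\<lambda>t. \<sigma> + \<Gamma> *v x t) ` {0..})" using B lin_sol[OF x] by blast
  then obtain K where K: "\<And>t. t \<ge> 0 \<Longrightarrow> norm (\<sigma> + \<Gamma> *v x t) \<le> K"
    unfolding bounded_iff by auto
  show "bounded ((\<lambda>t. \<Gamma> *v x t) ` {0..})"
    unfolding bounded_iff
  proof (intro exI ballI)
    fix v assume "v \<in> (\<lambda>t. \<Gamma> *v x t) ` {0..}"
    then obtain t where t: "t \<ge> 0" "v = \<Gamma> *v x t" by auto
    have "norm v = norm ((\<sigma> + \<Gamma> *v x t) - \<sigma>)" using t by simp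
    also have "\<dots> \<le> norm (\<sigma> + \<Gamma> *v x t) + norm \<sigma>" by (rule norm_triangle_ineq4)
    also have "\<dots> \<le> K + norm \<sigma>" using K[OF t(1)] by simp
    finally show "norm v \<le> K + norm \<sigma>" .
  qed
qed

end
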